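(* For all integers $n\ge1$ and $0\le l\le n-1$, $$\frac{N_l^{(n)}}{n}=\frac{B_l^{(n+l)}}{n+l}.$$
   Context: The Narumi numbers $N_l^{(a)}$ are defined by $\left(\frac{\log(1+t)}{t}\right)^a=\sum_{l\ge0}N_l^{(a)}\frac{t^l}{l!}$. The Bernoulli numbers of order $a$ are $B_l^{(a)}=B_l^{(a)}(0)$, where $\left(\frac{t}{e^t-1}\right)^a e^{xt}=\sum_{l\ge0}B_l^{(a)}(x)\frac{t^l}{l!}$. *)

theory Defs
  imports "HOL-Computational_Algebra.Formal_Power_Series"
begin

text \<open>Narumi numbers: (log(1+t)/t)^a = sum_l N_l^(a) t^l / l!.
  fps_ln 1 is the series of log(1+t); fps_shift 1 divides by t.\<close>
definition narumi :: "nat \<Rightarrow> nat \<Rightarrow> real" where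
  "narumi a l = fact l * fps_nth ((fps_shift 1 (fps_ln 1 :: real fps)) ^ a) l"

definition bernoulli_order :: "nat \<Rightarrow> nat \<Rightarrow> real" where
  "bernoulli_order a l = fact l * fps_nth ((fps_X / (fps_exp 1 - 1) :: real fps) ^ a) l"

end

theory Submission imports Defs begin
unbundle fps_syntax

lemma c_pos:
  fixes F :: "real fps"
  assumes F0: "F$0 \<noteq> 0" and r: "r \<ge> 1"
  shows "(inverse F ^ (r+1) * fps_deriv (fps_X * F)) $ r = 0"
proof -
  define H where "H = inverse F ^ r"
  have iF: "inverse F * F = 1" using F0 by (simp add: inverse_mult_eq_1)
  have dH: "fps_deriv H = - (fps_const (of_nat r) * fps_deriv F * inverse F ^ (r+1))"
  proof -
    have "fps_deriv H = fps_const (of_nat r) * (- fps_deriv F * (inverse F)\<^sup>2) * inverse F ^ (r - 1)"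
      unfolding H_def fps_deriv_power fps_inverse_deriv[OF F0] ..
    also have "\<dots> = - (fps_const (of_nat r) * fps_deriv F * (inverse F ^ 2 * inverse F ^ (r - 1)))"
      by (simp only: mult.assoc mult_minus_left mult_minus_right)
    also have "inverse F ^ 2 * inverse F ^ (r - 1) = inverse F ^ (r+1)"
      using r by (simp add: power_add[symmetric])
    finally show ?thesis .
  qed
  have eq: "inverse F ^ (r+1) * fps_deriv (fps_X * F) = H + fps_X * fps_deriv F * inverse F ^ (r+1)"
  proof -
    have "inverse F ^ (r+1) * fps_deriv (fps_X * F) = inverse F ^ r * (inverse F * F) + fps_X * fps_deriv F * inverse F ^ (r+1)"
      by (simp add: algebra_simps)
    then show ?thesis using iF by (simp add: H_def)
  qed
  have "fps_const (of_nat r) * (inverse F ^ (r+1) * fps_deriv (fps_X * F)) = fps_const (of_nat r) * H - fps_X * fps_deriv H"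
    unfolding eq dH by (simp add: ring_distribs mult_ac)
  hence "(fps_const (of_nat r) * (inverse F ^ (r+1) * fps_deriv (fps_X * F))) $ r = (fps_const (of_nat r) * H - fps_X * fps_deriv H) $ r"
    by (rule arg_cong)
  hence "of_nat r * (inverse F ^ (r+1) * fps_deriv (fps_X * F)) $ r = of_nat r * H $ r - (fps_X * fps_deriv H) $ r"
    by (simp only: fps_mult_left_const_nth fps_sub_nth)
  also have "\<dots> = 0" using r by simp
  finally show ?thesis using r by simp
qed

lemma c_zero:
  fixes F :: "real fps"
  assumes F0: "F$0 \<noteq> 0"
  shows "(inverse F ^ (0+1) * fps_deriv (fps_X * F)) $ 0 = 1"
  using F0 by (simp add: fps_mult_nth)

lemma c_gen:
  fixes F :: "real fps"
  assumes F0: "F$0 \<noteq> 0" and i: "i \<le> m"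
  shows "(inverse F ^ (m+1) * (fps_X * F)^i * fps_deriv (fps_X * F)) $ m = (if i = m then 1 else 0)"
proof -
  have iF: "inverse F * F = 1" using F0 by (simp add: inverse_mult_eq_1)
  have "inverse F ^ (m+1) * F ^ i = inverse F ^ (m - i + 1) * (inverse F * F) ^ i"
    using i by (simp add: power_mult_distrib power_add[symmetric] mult.assoc)
  hence p: "inverse F ^ (m+1) * F ^ i = inverse F ^ (m - i + 1)" using iF by simp
  have "inverse F ^ (m+1) * (fps_X * F)^i * fps_deriv (fps_X * F) = fps_X ^ i * (inverse F ^ (m+1) * F ^ i * fps_deriv (fps_X * F))"
    by (simp only: power_mult_distrib mult_ac)
  also have "\<dots> = fps_X ^ i * (inverse F ^ (m - i + 1) * fps_deriv (fps_X * F))" using p by simp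
  finally have "(inverse F ^ (m+1) * (fps_X * F)^i * fps_deriv (fps_X * F)) $ m = (fps_X ^ i * (inverse F ^ (m - i + 1) * fps_deriv (fps_X * F))) $ m"
    by (rule arg_cong)
  also have "\<dots> = (inverse F ^ (m - i + 1) * fps_deriv (fps_X * F)) $ (m - i)"
    using i by (simp only: fps_X_power_mult_nth not_less[symmetric] if_False)
  also have "\<dots> = (if i = m then 1 else 0)"
  proof (cases "i = m")
    case True then show ?thesis using c_zero[OF F0] by simp
  next
    case False then show ?thesis using c_pos[OF F0, of "m - i"] i by simp
  qed
  finally show ?thesis .
qed


lemma coeff_prod_cong:
  fixes A Q T D :: "real fps"
  assumes h: "\<forall>r\<le>m. Q$r = T$r"
  shows "(A*Q*D)$m = (A*T*D)$m"
proof -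
  have h2: "\<forall>r\<le>m. (A*Q)$r = (A*T)$r"
  proof (intro allI impI)
    fix r assume r: "r \<le> m"
    show "(A*Q)$r = (A*T)$r" unfolding fps_mult_nth
      by (rule sum.cong[OF refl]) (use h r in simp)
  qed
  show ?thesis unfolding fps_mult_nth[of "A*Q"] fps_mult_nth[of "A*T"]
    by (rule sum.cong[OF refl]) (use h2 in simp)
qed

lemma lagrange_key:
  fixes F P :: "real fps"
  assumes F0: "F$0 \<noteq> 0"
  shows "P$m = (inverse F^(m+1) * (P oo (fps_X*F)) * fps_deriv (fps_X*F))$m"
proof -
  define f where "f = fps_X * F"
  have f0: "f$0 = 0" by (simp add: f_def)
  define T where "T = (\<Sum>i=0..m. fps_const (P$i) * f^i)"
  have fi: "(f^i)$r = 0" if "r < i" for i r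
    using that by (simp add: f_def power_mult_distrib fps_X_power_mult_nth)
  have hT: "\<forall>r\<le>m. (P oo f)$r = T$r"
  proof (intro allI impI)
    fix r assume r: "r \<le> m"
    have "T$r = (\<Sum>i=0..m. P$i * (f^i)$r)" by (simp add: T_def fps_sum_nth)
    also have "\<dots> = (\<Sum>i=0..r. P$i * (f^i)$r)"
      by (rule sum.mono_neutral_right) (use r fi in auto)
    finally show "(P oo f)$r = T$r" by (simp add: fps_compose_nth)
  qed
  have "(inverse F^(m+1) * (P oo f) * fps_deriv f)$m = (inverse F^(m+1) * T * fps_deriv f)$m"
    by (rule coeff_prod_cong[OF hT])
  also have "inverse F^(m+1) * T * fps_deriv f = (\<Sum>i=0..m. fps_const (P$i) * (inverse F^(m+1) * f^i * fps_deriv f))"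
    unfolding T_def by (simp add: sum_distrib_left sum_distrib_right mult_ac)
  also have "(\<Sum>i=0..m. fps_const (P$i) * (inverse F^(m+1) * f^i * fps_deriv f)) $ m = (\<Sum>i=0..m. P$i * (if i = m then 1 else 0))"
    unfolding fps_sum_nth fps_mult_left_const_nth
  proof (rule sum.cong[OF refl])
    fix i assume "i \<in> {0..m}"
    hence "i \<le> m" by simp
    from c_gen[OF F0 this] show "P $ i * (inverse F ^ (m + 1) * f ^ i * fps_deriv f) $ m = P $ i * (if i = m then 1 else 0)"
      unfolding f_def by (rule arg_cong)
  qed
  also have "\<dots> = (\<Sum>i=0..m. if i = m then P$i else 0)" by (rule sum.cong) auto
  also have "\<dots> = P$m" by simp
  finally show ?thesis by (simp add: f_def)
qed


theorem corollary5:
  fixes n l :: nat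
  assumes "n \<ge> 1" and "l \<le> n - 1"
  shows "narumi n l / real n = bernoulli_order (n + l) l / real (n + l)"
proof -
  define lnf where "lnf = (fps_ln 1 :: real fps)"
  define E where "E = (fps_exp 1 - 1 :: real fps)"
  define F where "F = fps_shift 1 lnf"
  define G where "G = fps_shift 1 E"
  have lnX: "lnf = fps_X * F"
    by (rule fps_ext) (simp add: F_def lnf_def)
  have EX: "E = fps_X * G"
    by (rule fps_ext) (simp add: G_def E_def)
  have F0: "F$0 = 1" by (simp add: F_def lnf_def fps_ln_nth)
  have G0: "G$0 = 1" by (simp add: G_def E_def)
  have Einv: "E oo lnf = fps_X"
  proof -
    have "E oo fps_inv E = fps_X" by (rule fps_inv_right) (simp_all add: E_def)
    moreover have "fps_inv E = lnf" by (simp add: lnf_def E_def fps_ln_fps_exp_inv)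
    ultimately show ?thesis by simp
  qed
  have l0: "lnf $ 0 = 0" by (simp add: lnf_def)
  have "fps_X = (fps_X * G) oo lnf" using Einv EX by simp
  also have "\<dots> = (fps_X oo lnf) * (G oo lnf)" by (rule fps_compose_mult_distrib[OF l0])
  also have "\<dots> = fps_X * (F * (G oo lnf))" using l0 lnX by (simp add: mult.assoc)
  finally have "fps_X * 1 = fps_X * (F * (G oo lnf))" by simp
  hence FG: "F * (G oo lnf) = 1" by (subst (asm) mult_left_cancel) simp_all
  have GL0: "(G oo lnf)$0 \<noteq> 0" using G0 by simp
  have "inverse G oo lnf = inverse (G oo lnf)" by (rule fps_inverse_compose[OF l0]) (simp add: G0)
  also have "inverse (G oo lnf) = F * (G oo lnf) * inverse (G oo lnf)" using FG by simp
  also have "\<dots> = F" using inverse_mult_eq_1'[OF GL0] by (simp add: mult.assoc)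
  finally have iGc: "inverse G oo lnf = F" .
  have Pc: "inverse G ^ (n+l) oo lnf = F ^ (n+l)"
    using fps_compose_power[OF l0, of "inverse G" "n+l"] iGc by simp
  have key: "(inverse G ^ (n+l))$l = (inverse F^(l+1) * F^(n+l) * fps_deriv (fps_X*F))$l"
    using lagrange_key[of F "inverse G ^ (n+l)" l] F0 Pc lnX by simp
  have iFF: "inverse F * F = 1" using F0 by (simp add: inverse_mult_eq_1)
  obtain k where k: "n = Suc k" using assms(1) by (cases n) auto
  have e1: "n + l = (l+1) + k" using k by simp
  have "inverse F^(l+1) * F^(n+l) = (inverse F * F)^(l+1) * F^k"
    unfolding e1 power_add power_mult_distrib by (simp only: mult_ac)
  hence pw: "inverse F^(l+1) * F^(n+l) = F^(n-1)" using iFF k by simp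
  have dF: "fps_deriv (F^n) = fps_const (of_nat n) * fps_deriv F * F^(n-1)"
    by (rule fps_deriv_power)
  have Fn: "F^(n-1) * F = F^n" using assms(1)
    by (metis One_nat_def Suc_pred' less_one not_less power_Suc2 zero_less_iff_neq_zero le_numeral_extra(2))
  have "fps_const (of_nat n) * (F^(n-1) * fps_deriv (fps_X*F)) = fps_const (of_nat n) * (F^(n-1) * F) + fps_X * (fps_const (of_nat n) * fps_deriv F * F^(n-1))"
    by (simp add: ring_distribs mult_ac)
  also have "\<dots> = fps_const (of_nat n) * F^n + fps_X * fps_deriv (F^n)" using Fn dF by simp
  finally have "(fps_const (of_nat n) * (F^(n-1) * fps_deriv (fps_X*F)))$l = (fps_const (of_nat n) * F^n + fps_X * fps_deriv (F^n))$l"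
    by (rule arg_cong)
  hence "of_nat n * (F^(n-1) * fps_deriv (fps_X*F))$l = of_nat n * (F^n)$l + of_nat l * (F^n)$l"
    by (cases l) (simp_all only: fps_mult_left_const_nth fps_add_nth fps_X_mult_nth fps_deriv_nth, simp_all)
  note h = this
  have key': "(inverse G ^ (n+l))$l = (F^(n-1) * fps_deriv (fps_X*F))$l"
    using key by (simp only: pw)
  have c: "real n * (inverse G ^ (n+l))$l = real (n+l) * (F^n)$l"
    unfolding key' h by (simp add: algebra_simps)
  have XE: "fps_X / E = inverse G"
  proof -
    have "fps_X / E = fps_X / (G * fps_X)" by (simp add: EX mult.commute)
    also have "\<dots> = fps_X / fps_X / G" by (rule fps_divide_by_mult') simp
    also have "\<dots> = inverse G" using G0 by (simp add: fps_divide_self fps_divide_unit)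
    finally show ?thesis .
  qed
  have nar: "narumi n l = fact l * (F^n)$l" by (simp add: narumi_def F_def lnf_def)
  have ber: "bernoulli_order (n+l) l = fact l * (inverse G ^ (n+l))$l"
    by (simp add: bernoulli_order_def XE[unfolded E_def])
  have np: "real n > 0" "real (n+l) > 0" using assms(1) by auto
  show ?thesis unfolding nar ber using c np by (simp add: field_simps)
qed

end
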